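(* Let $\rho$ be a geometric Nielsen 1-chain and let $p_0,p_1,\dots,p_m$ ($m\ge1$) be an edge-path in $T_\rho$ with $p_0=p_m$. Then either $p_j=p_k$ for some distinct indices $0\le j,k<m$, or there exists an orientation on this edge-path.
   Context: Setup: $\mathbb F$ finitely generated free, $\Gamma$ finite connected graph with $\pi_1(\Gamma)\cong\mathbb F$, $H\subset\Gamma$ a subgraph, $f$ a homotopy equivalence with $f(H)\subseteq H$ and fixed lift $\tilde f$ to the universal cover $\widetilde\Gamma$ ($\mathbb F$ acting by deck transformations), $\widetilde H$ the preimage of $H$. 1-chains $x=\sum_ex_ee$ (reversing an edge's orientation negates its coefficient), $\mathrm{supp}(x)=\{e:x_e\ne0\}$; $\pi_H^\perp$ sets coefficients on edges of $\widetilde H$ to $0$; $[u,v]$ is the 1-chain of the reduced edge-path from vertex $u$ to vertex $v$ (coefficient $\pm1$ on its edges). A geometric Nielsen 1-chain is $\rho=\pi_H^\perp([u,v])$ with $\tilde f(u)=u,\tilde f(v)=v$ such that (GNC1) for distinct $g_1,g_2\in\mathbb F$, $\mathrm{supp}(g_1\rho)\cap\mathrm{supp}(g_2\rho)$ is empty or a single edge; (GNC2) each edge $e\notin\widetilde H$ lies in $\mathrm{supp}(g\rho)$ for exactly two elements $g_1,g_2$, and is the unique edge of $\mathrm{supp}(g_1\rho)\cap\mathrm{supp}(g_2\rho)$; (GNC3) some non-commuting $g_1,g_2$ have $\mathrm{supp}(\rho)\cap\mathrm{supp}(g_i\rho)\ne\emptyset$. The graph $T_\rho$ has vertex set $\mathbb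 F$ and an edge between distinct $g_1,g_2$ iff $\mathrm{supp}(g_1\rho)\cap\mathrm{supp}(g_2\rho)\ne\emptyset$. An edge-path $p_0,\dots,p_m$ is a sequence of vertices with $p_{j-1},p_j$ adjacent. For a closed edge-path ($p_0=p_m$), take indices mod $m$, let $g_j=p_j$, and let $e_j$ be the unique edge in $\mathrm{supp}(g_{j-1}\rho)\cap\mathrm{supp}(g_j\rho)$; then $e_j,e_{j+1}\in\mathrm{supp}(g_j\rho)$. An orientation on the path is a choice, for each index $j$, of an orientation of $e_j$ (choices for different indices are independent) such that $(g_j\rho)_{e_j}=-(g_j\rho)_{e_{j+1}}$ for all $0\le j<m$. *)

theory Defs
  imports "HOL-Algebra.Group" "HOL-Algebra.Group_Action"
begin

record ('v, 'e) sgraph =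
  ini :: "'e \<Rightarrow> 'v"
  ter :: "'e \<Rightarrow> 'v"
  rv  :: "'e \<Rightarrow> 'e"

definition serre_graph :: "('v, 'e) sgraph \<Rightarrow> bool" where
  "serre_graph X \<equiv> (\<forall>e. rv X (rv X e) = e \<and> rv X e \<noteq> e \<and> ini X (rv X e) = ter X e)"

definition reduced_path :: "('v, 'e) sgraph \<Rightarrow> 'v \<Rightarrow> 'v \<Rightarrow> 'e list \<Rightarrow> bool" where
  "reduced_path X u v es \<equiv>
     (es = [] \<longrightarrow> u = v) \<and>
     (es \<noteq> [] \<longrightarrow> ini X (hd es) = u \<and> ter X (last es) = v \<and>
        (\<forall>i. Suc i < length es \<longrightarrow>
              ter X (es ! i) = ini X (es ! Suc i) \<and> es ! Suc i \<noteq> rv X (es ! i)))"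

definition is_tree :: "('v, 'e) sgraph \<Rightarrow> bool" where
  "is_tree X \<equiv> serre_graph X \<and> (\<forall>u v. \<exists>!es. reduced_path X u v es)"

definition geod :: "('v, 'e) sgraph \<Rightarrow> 'v \<Rightarrow> 'v \<Rightarrow> 'e list" where
  "geod X u v = (THE es. reduced_path X u v es)"

text \<open>1-chains are integer-valued functions on oriented edges with
  x (rev e) = - x e.\<close>
definition path_chain :: "('v, 'e) sgraph \<Rightarrow> 'v \<Rightarrow> 'v \<Rightarrow> 'e \<Rightarrow> int" where
  "path_chain X u v = (\<lambda>e. if e \<in> set (geod X u v) then 1
                            else if rv X e \<in> set (geod X u v) then -1 else 0)"

definition supp :: "('e \<Rightarrow> int) \<Rightarrow> 'e set" where
  "supp x = {e. x e \<noteq> 0}"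

text \<open>A set of oriented edges consists of a single (unoriented) edge.\<close>
definition single_edge :: "('v, 'e) sgraph \<Rightarrow> 'e set \<Rightarrow> bool" where
  "single_edge X S \<equiv> (\<exists>e. S = {e, rv X e})"

definition proj_perp :: "'e set \<Rightarrow> ('e \<Rightarrow> int) \<Rightarrow> 'e \<Rightarrow> int" where
  "proj_perp Ht x = (\<lambda>e. if e \<in> Ht then 0 else x e)"

text \<open>The group G acts on the tree by graph automorphisms, freely on vertices and
  without edge inversions, with finitely many orbits of vertices and of edges
  (i.e. the quotient graph \<Gamma> is finite; it is connected as the tree is).
  Such a G is then a finitely generated free group, \<pi>_1 of the quotient.\<close>
definition deck_action ::
  "('g, 'b) monoid_scheme \<Rightarrow> ('v, 'e) sgraph \<Rightarrow> ('g \<Rightarrow> 'v \<Rightarrow> 'v) \<Rightarrow> ('g \<Rightarrow> 'e \<Rightarrow> 'e) \<Rightarrow> bool" where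
  "deck_action G X act acte \<equiv>
     group G \<and> is_tree X \<and>
     (\<forall>x. act \<one>\<^bsub>G\<^esub> x = x) \<and> (\<forall>e. acte \<one>\<^bsub>G\<^esub> e = e) \<and>
     (\<forall>g\<in>carrier G. \<forall>h\<in>carrier G. \<forall>x. act (g \<otimes>\<^bsub>G\<^esub> h) x = act g (act h x)) \<and>
     (\<forall>g\<in>carrier G. \<forall>h\<in>carrier G. \<forall>e. acte (g \<otimes>\<^bsub>G\<^esub> h) e = acte g (acte h e)) \<and>
     (\<forall>g\<in>carrier G. \<forall>e. ini X (acte g e) = act g (ini X e) \<and>
                        ter X (acte g e) = act g (ter X e) \<and>
                        acte g (rv X e) = rv X (acte g e)) \<and>
     (\<forall>g\<in>carrier G. \<forall>x. act g x = x \<longrightarrow> g = \<one>\<^bsub>G\<^esub>) \<and>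
     (\<forall>g\<in>carrier G. \<forall>e. acte g e \<noteq> rv X e) \<and>
     (\<exists>V0. finite V0 \<and> (\<forall>x. \<exists>g\<in>carrier G. \<exists>y\<in>V0. x = act g y)) \<and>
     (\<exists>E0. finite E0 \<and> (\<forall>e. \<exists>g\<in>carrier G. \<exists>d\<in>E0. e = acte g d))"

text \<open>Preimage \<tilde>H of a subgraph H of \<Gamma>: a G-invariant subgraph of the tree,
  given by a vertex set Hv and an edge set Ht.\<close>
definition lifted_subgraph ::
  "('g, 'b) monoid_scheme \<Rightarrow> ('v, 'e) sgraph \<Rightarrow> ('g \<Rightarrow> 'v \<Rightarrow> 'v) \<Rightarrow> ('g \<Rightarrow> 'e \<Rightarrow> 'e)
   \<Rightarrow> 'v set \<Rightarrow> 'e set \<Rightarrow> bool" where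
  "lifted_subgraph G X act acte Hv Ht \<equiv>
     (\<forall>e\<in>Ht. rv X e \<in> Ht \<and> ini X e \<in> Hv \<and> ter X e \<in> Hv) \<and>
     (\<forall>g\<in>carrier G. \<forall>x\<in>Hv. act g x \<in> Hv) \<and>
     (\<forall>g\<in>carrier G. \<forall>e\<in>Ht. acte g e \<in> Ht)"

text \<open>ftil is (the vertex map of) a lift to the universal cover of a homotopy
  equivalence f of \<Gamma> with f(H) \<subseteq> H: it is twisted-equivariant with respect to
  an automorphism phi of G (the induced map on \<pi>_1), maps \<tilde>H-vertices into \<tilde>H,
  and maps each \<tilde>H-edge to a path in \<tilde>H (the tightened image path lies in \<tilde>H).\<close>
definition lifted_he ::
  "('g, 'b) monoid_scheme \<Rightarrow> ('v, 'e) sgraph \<Rightarrow> ('g \<Rightarrow> 'v \<Rightarrow> 'v)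
   \<Rightarrow> 'v set \<Rightarrow> 'e set \<Rightarrow> ('v \<Rightarrow> 'v) \<Rightarrow> bool" where
  "lifted_he G X act Hv Ht ftil \<equiv>
     (\<exists>phi. phi \<in> iso G G \<and> (\<forall>g\<in>carrier G. \<forall>x. ftil (act g x) = act (phi g) (ftil x))) \<and>
     (\<forall>x\<in>Hv. ftil x \<in> Hv) \<and>
     (\<forall>e\<in>Ht. set (geod X (ftil (ini X e)) (ftil (ter X e))) \<subseteq> Ht)"

definition translate ::
  "('g, 'b) monoid_scheme \<Rightarrow> ('g \<Rightarrow> 'e \<Rightarrow> 'e) \<Rightarrow> 'g \<Rightarrow> ('e \<Rightarrow> int) \<Rightarrow> 'e \<Rightarrow> int" where
  "translate G acte g x = (\<lambda>e. x (acte (inv\<^bsub>G\<^esub> g) e))"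

definition geometric_nielsen ::
  "('g, 'b) monoid_scheme \<Rightarrow> ('v, 'e) sgraph \<Rightarrow> ('g \<Rightarrow> 'e \<Rightarrow> 'e)
   \<Rightarrow> 'e set \<Rightarrow> ('v \<Rightarrow> 'v) \<Rightarrow> ('e \<Rightarrow> int) \<Rightarrow> bool" where
  "geometric_nielsen G X acte Ht ftil \<rho> \<equiv>
     (\<exists>u v. ftil u = u \<and> ftil v = v \<and> \<rho> = proj_perp Ht (path_chain X u v)) \<and>
     \<comment> \<open>GNC1\<close>
     (\<forall>g1\<in>carrier G. \<forall>g2\<in>carrier G. g1 \<noteq> g2 \<longrightarrow>
        (let S = supp (translate G acte g1 \<rho>) \<inter> supp (translate G acte g2 \<rho>)
         in S = {} \<or> single_edge X S)) \<and>
     \<comment> \<open>GNC2\<close>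
     (\<forall>e. e \<notin> Ht \<longrightarrow>
        (\<exists>g1\<in>carrier G. \<exists>g2\<in>carrier G. g1 \<noteq> g2 \<and>
           {g\<in>carrier G. e \<in> supp (translate G acte g \<rho>)} = {g1, g2} \<and>
           supp (translate G acte g1 \<rho>) \<inter> supp (translate G acte g2 \<rho>) = {e, rv X e})) \<and>
     \<comment> \<open>GNC3\<close>
     (\<exists>g1\<in>carrier G. \<exists>g2\<in>carrier G. g1 \<otimes>\<^bsub>G\<^esub> g2 \<noteq> g2 \<otimes>\<^bsub>G\<^esub> g1 \<and>
        supp \<rho> \<inter> supp (translate G acte g1 \<rho>) \<noteq> {} \<and>
        supp \<rho> \<inter> supp (translate G acte g2 \<rho>) \<noteq> {})"

definition T_adj ::
  "('g, 'b) monoid_scheme \<Rightarrow> ('g \<Rightarrow> 'e \<Rightarrow> 'e) \<Rightarrow> ('e \<Rightarrow> int) \<Rightarrow> 'g \<Rightarrow> 'g \<Rightarrow> bool" where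
  "T_adj G acte \<rho> g1 g2 \<equiv> g1 \<in> carrier G \<and> g2 \<in> carrier G \<and> g1 \<noteq> g2 \<and>
     supp (translate G acte g1 \<rho>) \<inter> supp (translate G acte g2 \<rho>) \<noteq> {}"

definition T_edge_path ::
  "('g, 'b) monoid_scheme \<Rightarrow> ('g \<Rightarrow> 'e \<Rightarrow> 'e) \<Rightarrow> ('e \<Rightarrow> int) \<Rightarrow> (nat \<Rightarrow> 'g) \<Rightarrow> nat \<Rightarrow> bool" where
  "T_edge_path G acte \<rho> p m \<equiv> (\<forall>j\<in>{0..m}. p j \<in> carrier G) \<and>
     (\<forall>j\<in>{1..m}. T_adj G acte \<rho> (p (j - 1)) (p j))"

text \<open>Orientation on a closed edge-path (p 0 = p m): for each index j \<in> {1..m}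
  (indices mod m, so index 0 is index m) an oriented edge ori j representing e_j,
  i.e. lying in supp(g_{j-1}\<rho>) \<inter> supp(g_j\<rho>) (which is {e_j, rev e_j}), such that
  (g_j \<rho>)_{e_j} = -(g_j \<rho>)_{e_{j+1}} for all 0 \<le> j < m.\<close>
definition has_orientation ::
  "('g, 'b) monoid_scheme \<Rightarrow> ('g \<Rightarrow> 'e \<Rightarrow> 'e) \<Rightarrow> ('e \<Rightarrow> int) \<Rightarrow> (nat \<Rightarrow> 'g) \<Rightarrow> nat \<Rightarrow> bool" where
  "has_orientation G acte \<rho> p m \<equiv>
     (\<exists>ori :: nat \<Rightarrow> 'e.
        (\<forall>j\<in>{1..m}. ori j \<in> supp (translate G acte (p (j - 1)) \<rho>) \<inter> supp (translate G acte (p j) \<rho>)) \<and>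
        (\<forall>j<m. translate G acte (p j) \<rho> (ori (if j = 0 then m else j))
               = - translate G acte (p j) \<rho> (ori (Suc j))))"

end

theory Submission
  imports Defs
begin



lemma all_Suc_split: "(\<forall>i. Suc i < Suc (Suc n) \<longrightarrow> Q i) = (Q 0 \<and> (\<forall>i. Suc i < Suc n \<longrightarrow> Q (Suc i)))"
  apply auto
  apply (case_tac i) apply auto
  done

lemma rp_Nil[simp]: "reduced_path X u v [] \<longleftrightarrow> u = v"
  by (simp add: reduced_path_def)

lemma rp_single[simp]: "reduced_path X u v [e] \<longleftrightarrow> ini X e = u \<and> ter X e = v"
  by (simp add: reduced_path_def)

lemma rp_Cons2[simp]: "reduced_path X u v (e # f # es) \<longleftrightarrow>
   ini X e = u \<and> ter X e = ini X f \<and> f \<noteq> rv X e \<and> reduced_path X (ini X f) v (f # es)"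
  unfolding reduced_path_def
  apply (simp only: list.simps length_Cons all_Suc_split)
  apply simp
  apply blast
  done

lemma rp_Cons: "reduced_path X u v (e # es) \<Longrightarrow> ini X e = u \<and> reduced_path X (ter X e) v es"
  by (cases es) auto

lemma rp_prefix: "reduced_path X u v (xs @ y # ys) \<Longrightarrow> reduced_path X u (ini X y) xs"
proof (induction xs arbitrary: u)
  case Nil then show ?case by (cases ys) auto
next
  case (Cons x xs)
  show ?case
  proof (cases xs)
    case Nil
    then show ?thesis using Cons.prems by auto
  next
    case (Cons x' xs')
    then show ?thesis using Cons.prems Cons.IH[of "ini X x'"] by auto
  qed
qed

lemma rp_snoc: "reduced_path X u v xs \<Longrightarrow> v = ini X f \<Longrightarrow> (xs = [] \<or> f \<noteq> rv X (last xs))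
   \<Longrightarrow> reduced_path X u (ter X f) (xs @ [f])"
proof (induction xs arbitrary: u)
  case Nil then show ?case by auto
next
  case (Cons x xs)
  show ?case
  proof (cases xs)
    case Nil
    then show ?thesis using Cons.prems by auto
  next
    case (Cons x' xs')
    then show ?thesis using Cons.prems Cons.IH[of "ini X x'"] by auto
  qed
qed

lemma rp_last: "reduced_path X u v (xs @ [f]) \<Longrightarrow> ter X f = v"
proof (induction xs arbitrary: u)
  case Nil then show ?case by auto
next
  case (Cons x xs)
  then show ?case by (cases xs) auto
qed

lemma rp_suffix: "reduced_path X u v (xs @ ys) \<Longrightarrow> \<exists>w. reduced_path X w v ys"
proof (induction xs arbitrary: u)
  case Nil then show ?case by auto
next
  case (Cons x xs)
  then show ?case using rp_Cons[of X u v x "xs @ ys"] by auto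
qed

lemma rp_hd: "reduced_path X w v (e # ys) \<Longrightarrow> w = ini X e"
  using rp_Cons by fastforce

lemma geod_rp: "is_tree X \<Longrightarrow> reduced_path X u v (geod X u v)"
  unfolding is_tree_def geod_def by (metis theI')

lemma geod_eq: "is_tree X \<Longrightarrow> reduced_path X u v es \<Longrightarrow> geod X u v = es"
  unfolding is_tree_def geod_def by (metis the1_equality)

lemma geod_self[simp]: "is_tree X \<Longrightarrow> geod X u u = []"
  by (rule geod_eq) auto

lemma closed_nil: "is_tree X \<Longrightarrow> reduced_path X u u es \<Longrightarrow> es = []"
  using geod_eq geod_self by metis

lemma serre: "is_tree X \<Longrightarrow> rv X (rv X e) = e \<and> rv X e \<noteq> e \<and> ini X (rv X e) = ter X e \<and> ter X (rv X e) = ini X e"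
  unfolding is_tree_def serre_graph_def by metis

lemma no_rep: assumes "is_tree X" "reduced_path X u v (xs @ e # ys @ e # zs)" shows False
proof -
  obtain w where "reduced_path X w v (e # ys @ e # zs)" using rp_suffix[of X u v xs] assms(2) by auto
  moreover have "w = ini X e" using rp_hd calculation by metis
  ultimately have "reduced_path X (ini X e) (ini X e) (e # ys)" using rp_prefix[of X _ v "e # ys" e zs] by simp
  then show False using closed_nil[OF assms(1)] by blast
qed

lemma no_back: assumes "is_tree X" "reduced_path X u v (xs @ e # ys @ rv X e # zs)" shows False
proof -
  obtain w where "reduced_path X w v (e # ys @ rv X e # zs)" using rp_suffix[of X u v xs] assms(2) by auto
  then have "reduced_path X (ter X e) v (ys @ rv X e # zs)" using rp_Cons by metis
  then have r: "reduced_path X (ter X e) (ter X e) ys" using rp_prefix serre[OF assms(1)] by metis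
  then have "ys = []" using closed_nil[OF assms(1)] by blast
  then show False using \<open>reduced_path X w v (e # ys @ rv X e # zs)\<close> by auto
qed

lemma no_both: assumes "is_tree X" "reduced_path X u v es" "e \<in> set es" "rv X e \<in> set es" shows False
proof -
  obtain xs ys where es: "es = xs @ e # ys" using assms(3) split_list by metis
  have ne: "rv X e \<noteq> e" using serre[OF assms(1)] by metis
  have "rv X e \<in> set xs \<or> rv X e \<in> set ys" using assms(4) es ne by auto
  then show False
  proof
    assume "rv X e \<in> set xs"
    then obtain a b where "xs = a @ rv X e # b" using split_list by metis
    then have "reduced_path X u v (a @ rv X e # b @ rv X (rv X e) # ys)" using assms(2) es serre[OF assms(1)] by simp
    then show False using no_back[OF assms(1)] by blast
  next
    assume "rv X e \<in> set ys"
    then obtain a b where "ys = a @ rv X e # b" using split_list by metis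
    then show False using no_back[OF assms(1)] assms(2) es by simp
  qed
qed




definition dlt :: "('v,'e) sgraph \<Rightarrow> 'e \<Rightarrow> 'e \<Rightarrow> int" where
  "dlt X f e = (if e = f then 1 else if e = rv X f then -1 else 0)"

definition cL :: "('v,'e) sgraph \<Rightarrow> 'e list \<Rightarrow> 'e \<Rightarrow> int" where
  "cL X L e = (if e \<in> set L then 1 else if rv X e \<in> set L then -1 else 0)"

lemma pc_cL: "path_chain X a b e = cL X (geod X a b) e"
  by (simp add: path_chain_def cL_def)

lemma cL_snoc: assumes "is_tree X" "reduced_path X u v (L @ [f])"
  shows "cL X (L @ [f]) e = cL X L e + dlt X f e"
proof -
  have "f \<notin> set L"
  proof
    assume "f \<in> set L" then obtain a b where "L = a @ f # b" using split_list by metis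
    then show False using no_rep[OF assms(1), of u v a f b "[]"] assms(2) by simp
  qed
  moreover have "rv X f \<notin> set L" using no_both[OF assms] by auto
  note s = serre[OF assms(1)]
  show ?thesis
  proof (cases "e = f")
    case True then show ?thesis using \<open>f \<notin> set L\<close> \<open>rv X f \<notin> set L\<close> unfolding cL_def dlt_def by simp
  next
    case F1: False
    show ?thesis
    proof (cases "e = rv X f")
      case True then show ?thesis using \<open>f \<notin> set L\<close> \<open>rv X f \<notin> set L\<close> s[of f] unfolding cL_def dlt_def by simp
    next
      case False
      then have "rv X e \<noteq> f" using s[of e] by metis
      then show ?thesis using F1 False unfolding cL_def dlt_def by simp
    qed
  qed
qed

lemma K1: assumes t: "is_tree X" shows "path_chain X a (ter X f) e = path_chain X a (ini X f) e + dlt X f e"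
proof -
  let ?q = "geod X a (ini X f)"
  have rq: "reduced_path X a (ini X f) ?q" using geod_rp[OF t] .
  note s = serre[OF t]
  show ?thesis
  proof (cases "?q \<noteq> [] \<and> last ?q = rv X f")
    case True
    then obtain q' where q: "?q = q' @ [rv X f]" by (metis append_butlast_last_id)
    then have "reduced_path X a (ter X f) q'" using rp_prefix[of X a "ini X f" q' "rv X f" "[]"] rq s by simp
    then have g: "geod X a (ter X f) = q'" using geod_eq[OF t] by blast
    have "cL X ?q e = cL X q' e + dlt X (rv X f) e" using cL_snoc[OF t] rq q by metis
    moreover have "dlt X (rv X f) e = - dlt X f e" using s unfolding dlt_def by auto
    ultimately show ?thesis using g by (simp add: pc_cL)
  next
    case False
    then have "reduced_path X a (ter X f) (?q @ [f])" using rp_snoc[OF rq refl] serre[OF t, of "last ?q"] by metis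
    then have g: "geod X a (ter X f) = ?q @ [f]" using geod_eq[OF t] by blast
    show ?thesis using cL_snoc[OF t \<open>reduced_path X a (ter X f) (?q @ [f])\<close>] g by (simp add: pc_cL)
  qed
qed

lemma cocycle_aux: assumes t: "is_tree X" shows "reduced_path X b c L \<Longrightarrow> path_chain X a c e = path_chain X a b e + cL X L e"
proof (induction L arbitrary: c rule: rev_induct)
  case Nil then show ?case by (simp add: cL_def)
next
  case (snoc f L)
  have "reduced_path X b (ini X f) L" using rp_prefix[of X b c L f "[]"] snoc.prems by simp
  then have "path_chain X a (ini X f) e = path_chain X a b e + cL X L e" using snoc.IH by blast
  moreover have "c = ter X f" using rp_last snoc.prems by metis
  ultimately show ?case using K1[OF t, of a f e] cL_snoc[OF t snoc.prems] by simp
qed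

lemma cocycle: assumes t: "is_tree X" shows "path_chain X a c e = path_chain X a b e + path_chain X b c e"
  using cocycle_aux[OF t geod_rp[OF t]] by (simp add: pc_cL)

lemma pc_self[simp]: "is_tree X \<Longrightarrow> path_chain X a a e = 0"
  by (simp add: pc_cL cL_def)

lemma pc_vals: "path_chain X a b e \<in> {-1,0,1}"
  by (simp add: path_chain_def)

lemma pc_rv: assumes t: "is_tree X" shows "path_chain X a b (rv X e) = - path_chain X a b e"
  using no_both[OF t geod_rp[OF t, of a b], of e] serre[OF t, of e]
  by (auto simp: pc_cL cL_def)

lemma pc_edge: "is_tree X \<Longrightarrow> path_chain X (ini X f) (ter X f) e = dlt X f e"
  using K1[of X "ini X f" f e] by simp

definition hs :: "('v,'e) sgraph \<Rightarrow> 'e \<Rightarrow> 'v \<Rightarrow> int" where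
  "hs X e x = path_chain X (ini X e) x e"

lemma hs_diff: "is_tree X \<Longrightarrow> path_chain X a b e = hs X e b - hs X e a"
  unfolding hs_def using cocycle[of X "ini X e" b e a] by simp

lemma hs_ter: assumes t: "is_tree X" shows "hs X e (ter X e) = 1"
  using pc_edge[OF t, of e e] by (simp add: hs_def dlt_def)

lemma hs_ini: assumes t: "is_tree X" shows "hs X e (ini X e) = 0"
  by (simp add: hs_def t)

lemma hs_vals: assumes t: "is_tree X" shows "hs X e x = 0 \<or> hs X e x = 1"
proof -
  have "hs X e x = hs X e (ter X e) + path_chain X (ter X e) x e" using hs_diff[OF t, of "ter X e" x e] by simp
  then have "hs X e x = 1 + path_chain X (ter X e) x e" using hs_ter[OF t] by simp
  moreover have "hs X e x \<in> {-1,0,1}" unfolding hs_def by (rule pc_vals)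
  moreover have "path_chain X (ter X e) x e \<in> {-1,0,1}" by (rule pc_vals)
  ultimately show ?thesis by auto
qed

lemma hs_rv: assumes t: "is_tree X" shows "hs X (rv X e) x = 1 - hs X e x"
proof -
  have "hs X (rv X e) x = - path_chain X (ter X e) x e"
    unfolding hs_def using serre[OF t, of e] pc_rv[OF t] by simp
  also have "\<dots> = 1 - hs X e x" using hs_diff[OF t, of "ter X e" x e] hs_ter[OF t] by simp
  finally show ?thesis .
qed

lemma pc_one: "path_chain X a b e = 1 \<longleftrightarrow> e \<in> set (geod X a b)"
  by (simp add: path_chain_def)

lemma pc_zero: "path_chain X a b e = 0 \<longleftrightarrow> e \<notin> set (geod X a b) \<and> rv X e \<notin> set (geod X a b)"
  by (simp add: path_chain_def)

lemma T4_aux: assumes t: "is_tree X" and f: "f \<in> set (geod X a b)" and z: "path_chain X a b e = 0"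
  shows "hs X e (ini X f) = hs X e a \<and> hs X e (ter X f) = hs X e a"
proof -
  obtain ps qs where L: "geod X a b = ps @ f # qs" using f split_list by metis
  have "reduced_path X a (ini X f) ps" using rp_prefix[of X a b ps f qs] geod_rp[OF t, of a b] L by simp
  then have g: "geod X a (ini X f) = ps" using geod_eq[OF t] by blast
  have ne: "e \<notin> set ps" "rv X e \<notin> set ps" using z L by (auto simp: pc_zero)
  have "path_chain X a (ini X f) e = 0" using ne g by (simp add: pc_zero)
  then have 1: "hs X e (ini X f) = hs X e a" using hs_diff[OF t, of a "ini X f" e] by simp
  have "f \<noteq> e" "f \<noteq> rv X e" using z f by (auto simp: pc_zero)
  then have "e \<noteq> f" "e \<noteq> rv X f" using serre[OF t, of f] by metis+
  then have "dlt X f e = 0" unfolding dlt_def by simp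
  then have "hs X e (ter X f) = hs X e (ini X f)" using pc_edge[OF t, of f e] hs_diff[OF t, of "ini X f" "ter X f" e] by simp
  then show ?thesis using 1 by simp
qed

lemma T4: assumes t: "is_tree X" and f: "path_chain X a b f \<noteq> 0" and z: "path_chain X a b e = 0"
  shows "hs X e (ini X f) = hs X e a \<and> hs X e (ter X f) = hs X e a"
proof (cases "f \<in> set (geod X a b)")
  case True then show ?thesis using T4_aux[OF t _ z] by blast
next
  case False
  then have "rv X f \<in> set (geod X a b)" using f by (auto simp: pc_zero)
  then show ?thesis using T4_aux[OF t _ z, of "rv X f"] serre[OF t, of f] by auto
qed

lemma quad: assumes t: "is_tree X" and p1: "path_chain X A B o1 = 1" and p2: "path_chain X A B o2 = 1"
  and h1: "hs X o1 (ini X o2) = 1" and h2: "hs X o2 (ini X o1) = 1" shows False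
proof -
  have "o1 \<in> set (geod X A B)" using p1 pc_one by metis
  then obtain ps qs where L: "geod X A B = ps @ o1 # qs" and n1: "o1 \<notin> set ps" using split_list_first by metis
  have "reduced_path X A (ini X o1) ps" using rp_prefix[of X A B ps o1 qs] geod_rp[OF t, of A B] L by simp
  then have g: "geod X A (ini X o1) = ps" using geod_eq[OF t] by blast
  have a2: "hs X o2 A = 0" using p2 hs_diff[OF t, of A B o2] hs_vals[OF t, of o2 A] hs_vals[OF t, of o2 B] by auto
  have a1: "hs X o1 A = 0" using p1 hs_diff[OF t, of A B o1] hs_vals[OF t, of o1 A] hs_vals[OF t, of o1 B] by auto
  have "path_chain X A (ini X o1) o2 = 1" using hs_diff[OF t, of A "ini X o1" o2] a2 h2 by simp
  then have "o2 \<in> set ps" using g pc_one by metis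
  then obtain ps1 ps2 where P: "ps = ps1 @ o2 # ps2" using split_list by metis
  have "reduced_path X A (ini X o2) ps1" using rp_prefix[of X A B ps1 o2 "ps2 @ o1 # qs"] geod_rp[OF t, of A B] L P by simp
  then have g2: "geod X A (ini X o2) = ps1" using geod_eq[OF t] by blast
  have "path_chain X A (ini X o2) o1 = 1" using hs_diff[OF t, of A "ini X o2" o1] a1 h1 by simp
  then have "o1 \<in> set ps1" using g2 pc_one by metis
  then show False using n1 P by simp
qed




lemma map_rp:
  assumes hi: "\<And>e. ini X (\<phi> e) = \<psi> (ini X e)" and ht: "\<And>e. ter X (\<phi> e) = \<psi> (ter X e)"
    and hr: "\<And>e. \<phi> (rv X e) = rv X (\<phi> e)" and inj: "inj \<phi>"
  shows "reduced_path X u v L \<Longrightarrow> reduced_path X (\<psi> u) (\<psi> v) (map \<phi> L)"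
proof (induction L arbitrary: u)
  case Nil then show ?case by simp
next
  case (Cons e L)
  show ?case
  proof (cases L)
    case Nil then show ?thesis using Cons.prems hi ht by auto
  next
    case (Cons f L')
    have "\<phi> f \<noteq> rv X (\<phi> e)" using Cons.prems Cons hr inj by (metis inj_eq rp_Cons2)
    then show ?thesis using Cons.prems Cons Cons.IH[of "ini X f"] hi ht by auto
  qed
qed

lemma deck_facts: assumes "deck_action G X act acte"
  shows "group G" "is_tree X"
   "\<And>x. act \<one>\<^bsub>G\<^esub> x = x" "\<And>e. acte \<one>\<^bsub>G\<^esub> e = e"
   "\<And>g h x. g \<in> carrier G \<Longrightarrow> h \<in> carrier G \<Longrightarrow> act (g \<otimes>\<^bsub>G\<^esub> h) x = act g (act h x)"
   "\<And>g h e. g \<in> carrier G \<Longrightarrow> h \<in> carrier G \<Longrightarrow> acte (g \<otimes>\<^bsub>G\<^esub> h) e = acte g (acte h e)"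
   "\<And>g e. g \<in> carrier G \<Longrightarrow> ini X (acte g e) = act g (ini X e)"
   "\<And>g e. g \<in> carrier G \<Longrightarrow> ter X (acte g e) = act g (ter X e)"
   "\<And>g e. g \<in> carrier G \<Longrightarrow> acte g (rv X e) = rv X (acte g e)"
  using assms unfolding deck_action_def by auto

lemma acte_inv: assumes d: "deck_action G X act acte" and g: "g \<in> carrier G"
  shows "acte (inv\<^bsub>G\<^esub> g) (acte g e) = e" "acte g (acte (inv\<^bsub>G\<^esub> g) e) = e"
proof -
  note D = deck_facts[OF d]
  interpret group G by (rule D(1))
  show "acte (inv\<^bsub>G\<^esub> g) (acte g e) = e" using D(4) D(6)[of "inv\<^bsub>G\<^esub> g" g e] g by simp
  show "acte g (acte (inv\<^bsub>G\<^esub> g) e) = e" using D(4) D(6)[of g "inv\<^bsub>G\<^esub> g" e] g by simp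
qed

lemma geod_act: assumes d: "deck_action G X act acte" and g: "g \<in> carrier G"
  shows "geod X (act g a) (act g b) = map (acte g) (geod X a b)"
proof -
  note D = deck_facts[OF d]
  have inj: "inj (acte g)" by (metis acte_inv(1)[OF d g] injI)
  show ?thesis
    apply (rule geod_eq[OF D(2)])
    apply (rule map_rp[of X "acte g" "act g"])
    using D g inj geod_rp[OF D(2)] by auto
qed

lemma pc_act: assumes d: "deck_action G X act acte" and g: "g \<in> carrier G"
  shows "path_chain X (act g a) (act g b) (acte g e) = path_chain X a b e"
proof -
  note D = deck_facts[OF d]
  have inj: "inj (acte g)" by (metis acte_inv(1)[OF d g] injI)
  have "rv X (acte g e) = acte g (rv X e)" using D(9) g by simp
  then show ?thesis using inj unfolding path_chain_def geod_act[OF d g]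
    by (simp add: inj_image_mem_iff)
qed

lemma trans_formula: assumes d: "deck_action G X act acte" and l: "lifted_subgraph G X act acte Hv Ht"
  and g: "g \<in> carrier G"
  shows "translate G acte g (proj_perp Ht (path_chain X u v)) e =
         (if e \<in> Ht then 0 else path_chain X (act g u) (act g v) e)"
proof -
  note D = deck_facts[OF d]
  interpret group G by (rule D(1))
  have ig: "inv\<^bsub>G\<^esub> g \<in> carrier G" using g by simp
  have "acte (inv\<^bsub>G\<^esub> g) e \<in> Ht \<longleftrightarrow> e \<in> Ht"
    using l ig g acte_inv[OF d g, of e] unfolding lifted_subgraph_def by metis
  moreover have "path_chain X u v (acte (inv\<^bsub>G\<^esub> g) e) = path_chain X (act g u) (act g v) e"
    using pc_act[OF d g, of u v "acte (inv\<^bsub>G\<^esub> g) e"] acte_inv(2)[OF d g] by simp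
  ultimately show ?thesis unfolding translate_def proj_perp_def by simp
qed




lemma mod_ne1: "0 < i \<Longrightarrow> i < (m::nat) \<Longrightarrow> (j + i) mod m \<noteq> j mod m"
proof
  assume "0 < i" "i < m" "(j + i) mod m = j mod m"
  then have "m dvd (j + i - j)" using mod_eq_dvd_iff_nat[of j "j+i" m] by simp
  then show False using \<open>0 < i\<close> \<open>i < m\<close> by (simp add: nat_dvd_not_less)
qed

lemma mod_ne2: "2 \<le> i \<Longrightarrow> i < (m::nat) \<Longrightarrow> (j + i) mod m \<noteq> Suc j mod m"
proof
  assume "2 \<le> i" "i < m" "(j + i) mod m = Suc j mod m"
  then have "m dvd (j + i - Suc j)" using mod_eq_dvd_iff_nat[of "Suc j" "j+i" m] by simp
  moreover have "j + i - Suc j = i - 1" by simp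
  moreover have "0 < i - 1" "i - 1 < m" using \<open>2 \<le> i\<close> \<open>i < m\<close> by auto
  ultimately show False using nat_dvd_not_less by metis
qed

locale cyc =
  fixes X :: "('v,'e) sgraph" and Ht :: "'e set" and A B :: "nat \<Rightarrow> 'v" and E :: "nat \<Rightarrow> 'e"
    and m :: nat and r :: "nat \<Rightarrow> 'e \<Rightarrow> int"
  assumes t: "is_tree X" and m3: "3 \<le> m"
    and rdef: "\<And>k e. r k e = (if e \<in> Ht then 0 else path_chain X (A k) (B k) e)"
    and perA: "\<And>k. A (k + m) = A k" and perB: "\<And>k. B (k + m) = B k" and perE: "\<And>k. E (k + m) = E k"
    and s1: "\<And>k. r k (E k) \<noteq> 0" and s2: "\<And>k. r (Suc k) (E k) \<noteq> 0"
    and ex: "\<And>j k. r k (E j) \<noteq> 0 \<Longrightarrow> k mod m = j mod m \<or> k mod m = Suc j mod m"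
begin

definition Or :: "nat \<Rightarrow> 'e" where
  "Or k = (if hs X (E k) (ini X (E (Suc k))) = 1 then E k else rv X (E k))"

lemma EnH: "E j \<notin> Ht" using s1[of j] rdef by auto

lemma pc_s1: "path_chain X (A k) (B k) (E k) \<noteq> 0" using s1[of k] rdef EnH by auto
lemma pc_s2: "path_chain X (A (Suc k)) (B (Suc k)) (E k) \<noteq> 0" using s2[of k] rdef EnH by auto

lemma zero: assumes "2 \<le> i" "i \<le> m - 1" shows "path_chain X (A (j+i)) (B (j+i)) (E j) = 0"
proof -
  have "(j + i) mod m \<noteq> j mod m" "(j + i) mod m \<noteq> Suc j mod m"
    using mod_ne1[of i m j] mod_ne2[of i m j] assms m3 by auto
  then have "r (j+i) (E j) = 0" using ex by blast
  then show ?thesis using rdef EnH by simp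
qed

lemma chain: "2 \<le> i \<Longrightarrow> i \<le> m - 1 \<Longrightarrow> hs X (E j) (A (j+i)) = hs X (E j) (A (j+2))"
proof (induction i rule: nat_induct_at_least)
  case base then show ?case by simp
next
  case (Suc i)
  have z1: "path_chain X (A (j+i)) (B (j+i)) (E j) = 0" using zero Suc by simp
  have z2: "path_chain X (A (Suc (j+i))) (B (Suc (j+i))) (E j) = 0" using zero[of "Suc i" j] Suc by simp
  have "hs X (E j) (ini X (E (j+i))) = hs X (E j) (A (j+i))" using T4[OF t pc_s1 z1] by blast
  moreover have "hs X (E j) (ini X (E (j+i))) = hs X (E j) (A (Suc (j+i)))" using T4[OF t pc_s2 z2] by blast
  ultimately show ?case using Suc by simp
qed

lemma refl1: "hs X (E j) (ini X (E (Suc j))) = hs X (E j) (A (j+2)) \<and> hs X (E j) (ter X (E (Suc j))) = hs X (E j) (A (j+2))"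
proof -
  have z: "path_chain X (A (Suc (Suc j))) (B (Suc (Suc j))) (E j) = 0" using zero[of 2 j] m3 by simp
  show ?thesis using T4[OF t pc_s2[of "Suc j"] z] by simp
qed

lemma refl2: "hs X (E j) (ini X (E (j+m-1))) = hs X (E j) (A (j+2)) \<and> hs X (E j) (ter X (E (j+m-1))) = hs X (E j) (A (j+2))"
proof -
  have e: "j + m - 1 = j + (m - 1)" using m3 by simp
  have z: "path_chain X (A (j+(m-1))) (B (j+(m-1))) (E j) = 0" using zero[of "m-1" j] m3 by simp
  have "hs X (E j) (A (j+(m-1))) = hs X (E j) (A (j+2))" using chain[of "m-1" j] m3 by simp
  then show ?thesis using T4[OF t pc_s1[of "j+(m-1)"] z] e by simp
qed

lemma Oends: "hs X (Or j) (ini X (E (Suc j))) = 1 \<and> hs X (Or j) (ter X (E (Suc j))) = 1 \<and>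
   hs X (Or j) (ini X (E (j+m-1))) = 1 \<and> hs X (Or j) (ter X (E (j+m-1))) = 1"
proof (cases "hs X (E j) (ini X (E (Suc j))) = 1")
  case True
  then show ?thesis using refl1[of j] refl2[of j] unfolding Or_def by simp
next
  case False
  then have "hs X (E j) (ini X (E (Suc j))) = 0" using hs_vals[OF t] by metis
  then show ?thesis using refl1[of j] refl2[of j] False hs_rv[OF t] unfolding Or_def by simp
qed

lemma r_rv: "r k (rv X e) = - r k e" if "\<And>e. e \<in> Ht \<longleftrightarrow> rv X e \<in> Ht"
  using that[of e] rdef pc_rv[OF t] by simp

lemma Oin: "Or k = E k \<or> Or k = rv X (E k)" unfolding Or_def by simp

lemma constraint:
  assumes Hrv: "\<And>e. e \<in> Ht \<longleftrightarrow> rv X e \<in> Ht"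
  shows "r k (Or (k+m-1)) = - r k (Or k)"
proof -
  let ?o1 = "Or (k+m-1)" and ?o2 = "Or k"
  have km: "Suc (k+m-1) = k + m" using m3 by simp
  have E1: "E (Suc (k+m-1)) = E k" using km perE by simp
  have Ak: "A (Suc (k+m-1)) = A k" "B (Suc (k+m-1)) = B k" using km perA perB by simp_all
  have "r (Suc (k+m-1)) e = r k e" for e by (simp only: rdef Ak)
  then have "r k (E (k+m-1)) \<noteq> 0" using s2[of "k+m-1"] by metis
  then have n1: "r k ?o1 \<noteq> 0" using Oin[of "k+m-1"] r_rv[OF Hrv] by auto
  have n2: "r k ?o2 \<noteq> 0" using Oin[of k] r_rv[OF Hrv] s1[of k] by auto
  have nH: "?o1 \<notin> Ht" "?o2 \<notin> Ht" using n1 n2 rdef by auto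
  have v1: "path_chain X (A k) (B k) ?o1 = 1 \<or> path_chain X (A k) (B k) ?o1 = -1"
    using n1 rdef nH pc_vals[of X "A k" "B k" ?o1] by auto
  have v2: "path_chain X (A k) (B k) ?o2 = 1 \<or> path_chain X (A k) (B k) ?o2 = -1"
    using n2 rdef nH pc_vals[of X "A k" "B k" ?o2] by auto
  have h1: "hs X ?o1 (ini X ?o2) = 1"
    using Oends[of "k+m-1"] E1 Oin[of k] serre[OF t, of "E k"] by auto
  have h2: "hs X ?o2 (ini X ?o1) = 1"
    using Oends[of k] Oin[of "k+m-1"] serre[OF t, of "E (k+m-1)"] by auto
  have swap: "path_chain X (B k) (A k) e = - path_chain X (A k) (B k) e" for e
    using hs_diff[OF t, of "A k" "B k" e] hs_diff[OF t, of "B k" "A k" e] by simp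
  have "path_chain X (A k) (B k) ?o1 = - path_chain X (A k) (B k) ?o2"
  proof (rule ccontr)
    assume "\<not> ?thesis"
    then have "(path_chain X (A k) (B k) ?o1 = 1 \<and> path_chain X (A k) (B k) ?o2 = 1) \<or>
               (path_chain X (B k) (A k) ?o1 = 1 \<and> path_chain X (B k) (A k) ?o2 = 1)"
      using v1 v2 swap by auto
    then show False using quad[OF t _ _ h1 h2] by blast
  qed
  then show ?thesis using rdef nH by simp
qed

end




theorem lemma5p4:
  fixes G :: "('g, 'b) monoid_scheme"
    and X :: "('v, 'e) sgraph"
    and act :: "'g \<Rightarrow> 'v \<Rightarrow> 'v"
    and acte :: "'g \<Rightarrow> 'e \<Rightarrow> 'e"
    and Hv :: "'v set" and Ht :: "'e set"
    and ftil :: "'v \<Rightarrow> 'v"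
    and \<rho> :: "'e \<Rightarrow> int"
    and p :: "nat \<Rightarrow> 'g" and m :: nat
  assumes "deck_action G X act acte"
    and "lifted_subgraph G X act acte Hv Ht"
    and "lifted_he G X act Hv Ht ftil"
    and "geometric_nielsen G X acte Ht ftil \<rho>"
    and "m \<ge> 1"
    and "T_edge_path G acte \<rho> p m"
    and "p 0 = p m"
  shows "(\<exists>j k. j < m \<and> k < m \<and> j \<noteq> k \<and> p j = p k) \<or> has_orientation G acte \<rho> p m"
proof -
  note D = deck_facts[OF assms(1)]
  have t: "is_tree X" by (rule D(2))
  obtain u v where rho: "\<rho> = proj_perp Ht (path_chain X u v)"
    using assms(4) unfolding geometric_nielsen_def by blast
  define R where "R = (\<lambda>g. translate G acte g \<rho>)"
  have RR: "translate G acte g \<rho> = R g" for g by (simp add: R_def)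
  have Rf: "R g e = (if e \<in> Ht then 0 else path_chain X (act g u) (act g v) e)" if "g \<in> carrier G" for g e
    using trans_formula[OF assms(1) assms(2) that] rho R_def by simp
  have Hrv: "e \<in> Ht \<longleftrightarrow> rv X e \<in> Ht" for e
    using assms(2) serre[OF t, of e] unfolding lifted_subgraph_def by metis
  have Rrv: "R g (rv X e) = - R g e" if "g \<in> carrier G" for g e
    using Rf[OF that] Hrv[of e] pc_rv[OF t] by simp
  have suppR: "e \<in> supp (R g) \<longleftrightarrow> R g e \<noteq> 0" for g e by (simp add: supp_def)
  have pcar: "\<And>j. j \<le> m \<Longrightarrow> p j \<in> carrier G" using assms(6) unfolding T_edge_path_def by auto
  have padj: "\<And>j. 1 \<le> j \<Longrightarrow> j \<le> m \<Longrightarrow> T_adj G acte \<rho> (p (j - 1)) (p j)"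
    using assms(6) unfolding T_edge_path_def by auto
  have TA: "T_adj G acte \<rho> g h \<longleftrightarrow> g \<in> carrier G \<and> h \<in> carrier G \<and> g \<noteq> h \<and> (\<exists>e. R g e \<noteq> 0 \<and> R h e \<noteq> 0)" for g h
    unfolding T_adj_def RR supp_def by auto
  show ?thesis
  proof (cases "\<exists>j k. j < m \<and> k < m \<and> j \<noteq> k \<and> p j = p k")
    case True then show ?thesis by blast
  next
    case nr: False
    have pinj: "j < m \<Longrightarrow> k < m \<Longrightarrow> p j = p k \<Longrightarrow> j = k" for j k using nr by blast
    have "m \<noteq> 1" using padj[of 1] assms(7) TA by auto
    then have m2: "m \<ge> 2" using assms(5) by simp
    have "has_orientation G acte \<rho> p m"
    proof (cases "m = 2")
      case True
      obtain e0 where e0: "R (p 0) e0 \<noteq> 0" "R (p 1) e0 \<noteq> 0" using padj[of 1] True TA by auto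
      have c: "p 0 \<in> carrier G" "p 1 \<in> carrier G" using pcar True by auto
      show ?thesis unfolding has_orientation_def RR
        apply (rule exI[of _ "\<lambda>j. if j = 1 then e0 else rv X e0"])
        using True e0 Rrv[OF c(1)] Rrv[OF c(2)] assms(7)
        by (auto simp: suppR le_Suc_eq numeral_2_eq_2)
    next
      case False
      then have m3: "3 \<le> m" using m2 by simp
      define P where "P k = p (k mod m)" for k
      have Pc: "P k \<in> carrier G" for k unfolding P_def using pcar m3 by (simp add: less_imp_le)
      have Pper: "P (k + m) = P k" for k unfolding P_def by simp
      have Padj: "T_adj G acte \<rho> (P k) (P (Suc k))" for k
      proof (cases "Suc (k mod m) = m")
        case True
        then have "P (Suc k) = p m" unfolding P_def using assms(7) by (simp add: mod_Suc)
        moreover have "k mod m = m - 1" using True by simp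
        then have "P k = p (m - 1)" unfolding P_def by simp
        ultimately show ?thesis using padj[of m] m3 by simp
      next
        case False
        then have "P (Suc k) = p (Suc (k mod m))" unfolding P_def by (simp add: mod_Suc)
        moreover have "Suc (k mod m) \<le> m" using m3 by (simp add: Suc_leI)
        ultimately show ?thesis using padj[of "Suc (k mod m)"] unfolding P_def by simp
      qed
      define E where "E k = (SOME e. R (P k) e \<noteq> 0 \<and> R (P (Suc k)) e \<noteq> 0)" for k
      have Es: "R (P k) (E k) \<noteq> 0 \<and> R (P (Suc k)) (E k) \<noteq> 0" for k
        unfolding E_def by (rule someI_ex) (use Padj[of k] TA in auto)
      have Pneq: "P k \<noteq> P (Suc k)" for k using Padj[of k] TA by auto
      define A where "A k = act (P k) u" for k
      define B where "B k = act (P k) v" for k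
      define r where "r k e = R (P k) e" for k e
      have Pmod: "P k = P j \<Longrightarrow> k mod m = j mod m" for k j
        unfolding P_def using pinj m3 by simp
      have exx: "k mod m = j mod m \<or> k mod m = Suc j mod m" if "r k (E j) \<noteq> 0" for j k
      proof -
        have nH: "E j \<notin> Ht" using Es[of j] Rf[OF Pc] by auto
        obtain g1 g2 where gg: "{g \<in> carrier G. E j \<in> supp (R g)} = {g1, g2}"
          using assms(4) nH unfolding geometric_nielsen_def RR by blast
        have "P j \<in> {g1, g2}" "P (Suc j) \<in> {g1, g2}" "P k \<in> {g1, g2}"
          using gg[symmetric] Es[of j] that Pc unfolding r_def by (auto simp: suppR)
        then have "P k = P j \<or> P k = P (Suc j)" using Pneq[of j] by auto
        then show ?thesis using Pmod by blast
      qed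
      interpret C: cyc X Ht A B E m r
      proof
        show "is_tree X" by (rule t)
        show "3 \<le> m" by (rule m3)
        show "r k e = (if e \<in> Ht then 0 else path_chain X (A k) (B k) e)" for k e
          unfolding r_def A_def B_def using Rf[OF Pc] by simp
        show "A (k + m) = A k" for k unfolding A_def Pper ..
        show "B (k + m) = B k" for k unfolding B_def Pper ..
        show "E (k + m) = E k" for k
        proof -
          have "P (Suc (k + m)) = P (Suc k)" using Pper[of "Suc k"] by simp
          then show ?thesis unfolding E_def Pper by simp
        qed
        show "r k (E k) \<noteq> 0" for k unfolding r_def using Es by blast
        show "r (Suc k) (E k) \<noteq> 0" for k unfolding r_def using Es by blast
        show "r k (E j) \<noteq> 0 \<Longrightarrow> k mod m = j mod m \<or> k mod m = Suc j mod m" for j k by (rule exx)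
      qed
      have Orper: "C.Or (k + m) = C.Or k" for k
      proof -
        have "E (k+m) = E k" "E (Suc (k + m)) = E (Suc k)" using C.perE[of k] C.perE[of "Suc k"] by simp_all
        then show ?thesis unfolding C.Or_def by simp
      qed
      have pP: "j \<le> m \<Longrightarrow> p j = P j" for j
        unfolding P_def using assms(7) by (cases "j = m") auto
      have Rm: "R (P (Suc k)) (C.Or k) \<noteq> 0 \<and> R (P k) (C.Or k) \<noteq> 0" for k
        using C.Oin[of k] Es[of k] Rrv[OF Pc] by auto
      show ?thesis unfolding has_orientation_def RR
      proof (rule exI[of _ "\<lambda>j. C.Or (j - 1)"], intro conjI ballI allI impI)
        fix j assume j: "j \<in> {1..m}"
        then have "p (j - 1) = P (j - 1)" "p j = P (Suc (j - 1))" using pP by auto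
        then show "C.Or (j - 1) \<in> supp (R (p (j - 1))) \<inter> supp (R (p j))"
          using Rm[of "j - 1"] by (simp add: suppR)
      next
        fix j assume j: "j < m"
        have cst: "r j (C.Or (j + m - 1)) = - r j (C.Or j)" using C.constraint Hrv by blast
        have pj: "p j = P j" using pP j by simp
        show "R (p j) (C.Or ((if j = 0 then m else j) - 1)) = - R (p j) (C.Or (Suc j - 1))"
        proof (cases "j = 0")
          case True then show ?thesis using cst pj unfolding r_def by simp
        next
          case False
          then have "j + m - 1 = (j - 1) + m" by simp
          then have "C.Or (j + m - 1) = C.Or (j - 1)" using Orper by simp
          then show ?thesis using cst pj False unfolding r_def by simp
        qed
      qed
    qed
    then show ?thesis by blast
  qed
qed



end
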